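(* Let $\mu,\nu,q\in\mathscr{P}_2(\mathbb{R}^d)$ with $\mu\preceq_{\mathrm{c}}\nu$ and $q$ not giving mass to small sets. For every $\psi\in C_2(\mathbb{R}^d)$ we have $\tilde{\mathcal{D}}(\operatorname{conv}\psi)\le\tilde{\mathcal{D}}(\psi)$, and consequently \[ \inf_{\psi\in C_2(\mathbb{R}^d)}\tilde{\mathcal{D}}(\psi)=\inf_{\substack{\psi\in C_2(\mathbb{R}^d),\\ \psi\text{ convex}}}\tilde{\mathcal{D}}(\psi). \]
   Context: $\mathscr{P}_2(\mathbb{R}^d)$: Borel probability measures with finite second moment. $\mu\preceq_{\mathrm{c}}\nu$ means $\int f\,d\mu\le\int f\,d\nu$ for all convex $f:\mathbb{R}^d\to\mathbb{R}$. $q$ does not give mass to small sets: $q(A)=0$ for measurable $A$ of Hausdorff dimension $\le d-1$. $\mathrm{MCov}(\rho,\varrho)\coloneqq\sup_{\tilde\pi\in\mathsf{Cpl}(\rho,\varrho)}\int\langle y,z\rangle\,d\tilde\pi$ over couplings. $C_2(\mathbb{R}^d)$ is the set of continuous $\psi:\mathbb{R}^d\to\mathbb{R}$ such that there exist $a,k,\ell\in\mathbb{R}$ with $\ell+\frac{|y|^2}{2}\le\psi(y)\le a+k|y|^2$ for all $y$. $\operatorname{conv}\psi$ denotes the convex hull of $\psi$, the greatest convex function below $\psi$ (for $\psi\in C_2(\mathbb{R}^d)$ one has $\operatorname{conv}\psi\in C_2(\mathbb{R}^d)$). $\mathscr{P}_2^x(\mathbb{R}^d)$: elements of $\mathscr{P}_2(\mathbb{R}^d)$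 with barycenter $x$. For $\psi\in C_2(\mathbb{R}^d)$: $\varphi^\psi(x)\coloneqq\inf_{p\in\mathscr{P}_2^x(\mathbb{R}^d)}\big(\int\psi\,dp-\mathrm{MCov}(p,q)\big)$ and $\tilde{\mathcal{D}}(\psi)\coloneqq\int\psi\,d\nu-\int\varphi^\psi\,d\mu$. *)

theory Defs
  imports "HOL-Probability.Probability"
begin

definition P2 :: "'a::euclidean_space measure set" where
  "P2 = {M. prob_space M \<and> sets M = sets borel \<and> integrable M (\<lambda>y. (norm y)\<^sup>2)}"

definition P2_bary :: "'a::euclidean_space \<Rightarrow> 'a measure set" where
  "P2_bary x = {p \<in> P2. integral\<^sup>L p (\<lambda>y. y) = x}"

text \<open>Integral of a real function as an extended real: positive part minus negative part
  (well defined for convex functions, which are bounded below by an affine function).\<close>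
definition ext_integral :: "'a measure \<Rightarrow> ('a \<Rightarrow> real) \<Rightarrow> ereal" where
  "ext_integral M f =
     enn2ereal (\<integral>\<^sup>+ x. ennreal (f x) \<partial>M) - enn2ereal (\<integral>\<^sup>+ x. ennreal (- f x) \<partial>M)"

definition convex_order :: "'a::euclidean_space measure \<Rightarrow> 'a measure \<Rightarrow> bool" where
  "convex_order \<mu> \<nu> \<longleftrightarrow>
     (\<forall>f::'a \<Rightarrow> real. convex_on UNIV f \<longrightarrow> ext_integral \<mu> f \<le> ext_integral \<nu> f)"

definition hd_term :: "real \<Rightarrow> 'a::metric_space set \<Rightarrow> real" where
  "hd_term s C = (if C = {} then 0 else if s = 0 then 1 else diameter C powr s)"

definition hausdorff_pre :: "real \<Rightarrow> real \<Rightarrow> 'a::metric_space set \<Rightarrow> ennreal" where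
  "hausdorff_pre s \<delta> A =
     (INF C \<in> {C :: nat \<Rightarrow> 'a set. A \<subseteq> (\<Union>i. C i) \<and> (\<forall>i. bounded (C i) \<and> diameter (C i) \<le> \<delta>)}.
        (\<Sum>i. ennreal (hd_term s (C i))))"

definition hausdorff_measure :: "real \<Rightarrow> 'a::metric_space set \<Rightarrow> ennreal" where
  "hausdorff_measure s A = (SUP \<delta> \<in> {0<..}. hausdorff_pre s \<delta> A)"

definition hausdorff_dim :: "'a::metric_space set \<Rightarrow> ereal" where
  "hausdorff_dim A = Inf {ereal s | s. 0 \<le> s \<and> hausdorff_measure s A = 0}"

definition no_mass_small_sets :: "'a::euclidean_space measure \<Rightarrow> bool" where
  "no_mass_small_sets q \<longleftrightarrow>
     (\<forall>A \<in> sets borel. hausdorff_dim (A :: 'a set) \<le> ereal (real DIM('a) - 1) \<longrightarrow> emeasure q A = 0)"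

definition Cpl :: "'a::euclidean_space measure \<Rightarrow> 'a measure \<Rightarrow> ('a \<times> 'a) measure set" where
  "Cpl \<rho> \<sigma> = {\<pi>. prob_space \<pi> \<and> sets \<pi> = sets (borel \<Otimes>\<^sub>M borel) \<and>
                  distr \<pi> borel fst = \<rho> \<and> distr \<pi> borel snd = \<sigma>}"

definition MCov :: "'a::euclidean_space measure \<Rightarrow> 'a measure \<Rightarrow> real" where
  "MCov \<rho> \<sigma> = (SUP \<pi> \<in> Cpl \<rho> \<sigma>. integral\<^sup>L \<pi> (\<lambda>(y, z). inner y z))"

definition C2 :: "('a::euclidean_space \<Rightarrow> real) set" where
  "C2 = {\<psi>. continuous_on UNIV \<psi> \<and>
            (\<exists>a k l. \<forall>y. l + (norm y)\<^sup>2 / 2 \<le> \<psi> y \<and> \<psi> y \<le> a + k * (norm y)\<^sup>2)}"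

definition conv_fun :: "('a::euclidean_space \<Rightarrow> real) \<Rightarrow> 'a \<Rightarrow> real" where
  "conv_fun \<psi> = (\<lambda>x. Sup {g x | g. convex_on UNIV g \<and> (\<forall>y. g y \<le> \<psi> y)})"

definition phi :: "'a::euclidean_space measure \<Rightarrow> ('a \<Rightarrow> real) \<Rightarrow> 'a \<Rightarrow> real" where
  "phi q \<psi> x = (INF p \<in> P2_bary x. integral\<^sup>L p \<psi> - MCov p q)"

definition Dtilde :: "'a::euclidean_space measure \<Rightarrow> 'a measure \<Rightarrow> 'a measure
                      \<Rightarrow> ('a \<Rightarrow> real) \<Rightarrow> real" where
  "Dtilde \<mu> \<nu> q \<psi> = integral\<^sup>L \<nu> \<psi> - integral\<^sup>L \<mu> (phi q \<psi>)"

end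

theory Submission imports Defs begin

lemma P2_D:
  assumes "p \<in> P2"
  shows "prob_space p" "sets p = sets borel" "space p = UNIV" "integrable p (\<lambda>y. (norm y)\<^sup>2)"
  using assms unfolding P2_def by (auto dest: sets_eq_imp_space_eq)

lemma P2_measurable:
  fixes f :: "'a::euclidean_space \<Rightarrow> 'b::topological_space"
  assumes "p \<in> P2" "f \<in> borel_measurable borel"
  shows "f \<in> borel_measurable p"
  using assms by (subst measurable_cong_sets[OF P2_D(2)[OF assms(1)] refl])

lemma P2_integrable_quad:
  fixes f :: "'a::euclidean_space \<Rightarrow> real"
  assumes p: "p \<in> P2" and f: "f \<in> borel_measurable borel"
    and b: "\<And>y. \<bar>f y\<bar> \<le> A + B * (norm y)\<^sup>2"
  shows "integrable p f"
proof -
  interpret prob_space p using P2_D[OF p] by simp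
  have i1: "integrable p (\<lambda>y. \<bar>A\<bar> + \<bar>B\<bar> * (norm y)\<^sup>2)"
    using P2_D(4)[OF p] by (intro Bochner_Integration.integrable_add integrable_mult_right) auto
  have b2: "norm (f y) \<le> norm (\<bar>A\<bar> + \<bar>B\<bar> * (norm y)\<^sup>2)" for y :: 'a
  proof -
    have "B * (norm y)\<^sup>2 \<le> \<bar>B\<bar> * (norm y)\<^sup>2"
      by (intro mult_right_mono) auto
    moreover have "0 \<le> \<bar>B\<bar> * (norm y)\<^sup>2" by simp
    ultimately show ?thesis using b[of y] unfolding real_norm_def by linarith
  qed
  show ?thesis
    using Bochner_Integration.integrable_bound[OF i1 P2_measurable[OF p f] AE_I2[OF b2]] by simp
qed

lemma le_1_plus_sq: "(x::real) \<le> 1 + x\<^sup>2"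
proof -
  have "0 \<le> (x - 1/2)\<^sup>2" by simp
  then have "0 \<le> x\<^sup>2 - x + 1/4" by (simp add: power2_eq_square algebra_simps)
  then show ?thesis by linarith
qed

lemma P2_integrable_inner:
  fixes b :: "'a::euclidean_space"
  assumes p: "p \<in> P2"
  shows "integrable p (\<lambda>y. y \<bullet> b)"
proof (rule P2_integrable_quad[OF p, where A="norm b * norm b" and B=1])
  fix y :: 'a
  have "\<bar>y \<bullet> b\<bar> \<le> norm y * norm b" by (rule Cauchy_Schwarz_ineq2)
  also have "\<dots> \<le> norm b * norm b + 1 * (norm y)\<^sup>2"
  proof -
    have "0 \<le> (norm y - norm b)\<^sup>2" by simp
    then have "2 * (norm y * norm b) \<le> (norm y)\<^sup>2 + (norm b)\<^sup>2"
      by (simp add: power2_eq_square algebra_simps)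
    moreover have "0 \<le> (norm y)\<^sup>2" "0 \<le> (norm b)\<^sup>2" "0 \<le> norm y * norm b" by auto
    ultimately show ?thesis unfolding power2_eq_square mult_1 by linarith
  qed
  finally show "\<bar>y \<bullet> b\<bar> \<le> norm b * norm b + 1 * (norm y)\<^sup>2" .
qed simp

lemma P2_integrable_id:
  fixes p :: "'a::euclidean_space measure"
  assumes p: "p \<in> P2"
  shows "integrable p (\<lambda>y. y)"
proof -
  interpret prob_space p using P2_D[OF p] by simp
  have i1: "integrable p (\<lambda>y. 1 + (norm y)\<^sup>2)"
    using P2_D(4)[OF p] by (intro Bochner_Integration.integrable_add) auto
  have b2: "norm y \<le> norm (1 + (norm y)\<^sup>2)" for y :: 'a
    using le_1_plus_sq[of "norm y"] by simp
  show ?thesis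
    by (rule Bochner_Integration.integrable_bound[OF i1 _ AE_I2[OF b2]])
       (rule P2_measurable[OF p], simp)
qed

lemma convex_half_sq: "convex_on UNIV (\<lambda>y::'a::real_inner. l + (norm y)\<^sup>2 / 2)"
proof (rule convex_onI)
  fix t :: real and x y :: 'a
  assume t: "0 < t" "t < 1"
  have e: "(norm ((1 - t) *\<^sub>R x + t *\<^sub>R y))\<^sup>2
     = (1 - t)^2 * (x \<bullet> x) + 2 * (1 - t) * t * (x \<bullet> y) + t^2 * (y \<bullet> y)"
    unfolding power2_norm_eq_inner by (simp add: inner_add_left inner_add_right inner_commute power2_eq_square algebra_simps)
  have e2: "(norm (x - y))\<^sup>2 = x \<bullet> x - 2 * (x \<bullet> y) + y \<bullet> y"
    by (simp add: power2_norm_eq_inner inner_diff_left inner_diff_right inner_commute)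
  have "(1 - t) * (x \<bullet> x) + t * (y \<bullet> y) - ((1 - t)^2 * (x \<bullet> x) + 2 * (1 - t) * t * (x \<bullet> y) + t^2 * (y \<bullet> y))
        = (1 - t) * t * (x \<bullet> x - 2 * (x \<bullet> y) + y \<bullet> y)"
    by (simp add: power2_eq_square algebra_simps)
  moreover have "0 \<le> (1 - t) * t * (norm (x - y))\<^sup>2" using t by auto
  ultimately have "(norm ((1 - t) *\<^sub>R x + t *\<^sub>R y))\<^sup>2 \<le> (1 - t) * (norm x)\<^sup>2 + t * (norm y)\<^sup>2"
    unfolding e e2 by (simp add: power2_norm_eq_inner)
  then have "l + (norm ((1 - t) *\<^sub>R x + t *\<^sub>R y))\<^sup>2 / 2 \<le> l + ((1 - t) * (norm x)\<^sup>2 + t * (norm y)\<^sup>2) / 2"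
    by (intro add_left_mono divide_right_mono) auto
  also have "\<dots> = (1 - t) * (l + (norm x)\<^sup>2 / 2) + t * (l + (norm y)\<^sup>2 / 2)"
    by (simp add: field_simps)
  finally show "l + (norm ((1 - t) *\<^sub>R x + t *\<^sub>R y))\<^sup>2 / 2 \<le> (1 - t) * (l + (norm x)\<^sup>2 / 2) + t * (l + (norm y)\<^sup>2 / 2)" .
qed simp

lemma C2_D:
  assumes "\<psi> \<in> C2"
  shows "\<psi> \<in> borel_measurable borel" "continuous_on UNIV \<psi>"
    "\<exists>a k l. \<forall>y. l + (norm y)\<^sup>2 / 2 \<le> \<psi> y \<and> \<psi> y \<le> a + k * (norm y)\<^sup>2"
  using assms unfolding C2_def by (auto intro: borel_measurable_continuous_onI)

lemma C2_integrable:
  fixes \<psi> :: "'a::euclidean_space \<Rightarrow> real"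
  assumes psi: "\<psi> \<in> C2" and p: "p \<in> P2"
  shows "integrable p \<psi>"
proof -
  obtain a k l where b: "\<And>y. l + (norm y)\<^sup>2 / 2 \<le> \<psi> y \<and> \<psi> y \<le> a + k * (norm y)\<^sup>2"
    using C2_D(3)[OF psi] by blast
  show ?thesis
  proof (rule P2_integrable_quad[OF p C2_D(1)[OF psi], where A="\<bar>a\<bar> + \<bar>l\<bar>" and B="\<bar>k\<bar> + 1"])
    fix y :: 'a
    have "k * (norm y)\<^sup>2 \<le> \<bar>k\<bar> * (norm y)\<^sup>2" by (intro mult_right_mono) auto
    then show "\<bar>\<psi> y\<bar> \<le> \<bar>a\<bar> + \<bar>l\<bar> + (\<bar>k\<bar> + 1) * (norm y)\<^sup>2"
      using b[of y] abs_ge_self[of a] abs_ge_self[of l] abs_ge_minus_self[of l]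
        zero_le_power2[of "norm y"] mult_nonneg_nonneg[OF abs_ge_zero[of k] zero_le_power2[of "norm y"]]
      unfolding abs_le_iff distrib_right mult_1 by (intro conjI; linarith)
  qed
qed


lemma conv_fun_upper:
  fixes \<psi> :: "'a::euclidean_space \<Rightarrow> real"
  assumes "convex_on UNIV g" "\<And>y. g y \<le> \<psi> y"
  shows "g x \<le> conv_fun \<psi> x"
  unfolding conv_fun_def
proof (rule cSup_upper)
  show "g x \<in> {g x |g. convex_on UNIV g \<and> (\<forall>y. g y \<le> \<psi> y)}" using assms by blast
  show "bdd_above {g x |g. convex_on UNIV g \<and> (\<forall>y. g y \<le> \<psi> y)}"
    by (rule bdd_aboveI[where M="\<psi> x"]) auto
qed

lemma conv_fun_le:
  fixes \<psi> :: "'a::euclidean_space \<Rightarrow> real"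
  assumes "\<psi> \<in> C2"
  shows "conv_fun \<psi> x \<le> \<psi> x"
proof -
  obtain a k l where b: "\<And>y. l + (norm y)\<^sup>2 / 2 \<le> \<psi> y \<and> \<psi> y \<le> a + k * (norm y)\<^sup>2"
    using C2_D(3)[OF assms] by blast
  show ?thesis unfolding conv_fun_def
  proof (rule cSup_least)
    show "{g x |g. convex_on UNIV g \<and> (\<forall>y. g y \<le> \<psi> y)} \<noteq> {}"
      using convex_half_sq[of l] b by blast
  qed auto
qed

lemma conv_fun_lower:
  fixes \<psi> :: "'a::euclidean_space \<Rightarrow> real"
  assumes "\<And>y. l + (norm y)\<^sup>2 / 2 \<le> \<psi> y"
  shows "l + (norm x)\<^sup>2 / 2 \<le> conv_fun \<psi> x"
  using conv_fun_upper[OF convex_half_sq[of l], of \<psi>] assms by blast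

lemma conv_fun_convex:
  fixes \<psi> :: "'a::euclidean_space \<Rightarrow> real"
  assumes "\<psi> \<in> C2"
  shows "convex_on UNIV (conv_fun \<psi>)"
proof (rule convex_onI)
  fix t :: real and x y :: 'a
  assume t: "0 < t" "t < 1"
  obtain a k l where b: "\<And>y. l + (norm y)\<^sup>2 / 2 \<le> \<psi> y \<and> \<psi> y \<le> a + k * (norm y)\<^sup>2"
    using C2_D(3)[OF assms] by blast
  show "conv_fun \<psi> ((1 - t) *\<^sub>R x + t *\<^sub>R y) \<le> (1 - t) * conv_fun \<psi> x + t * conv_fun \<psi> y"
    unfolding conv_fun_def[of \<psi>, THEN fun_cong, of "(1 - t) *\<^sub>R x + t *\<^sub>R y"]
  proof (rule cSup_least)
    show "{g ((1 - t) *\<^sub>R x + t *\<^sub>R y) |g. convex_on UNIV g \<and> (\<forall>y. g y \<le> \<psi> y)} \<noteq> {}"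
      using convex_half_sq[of l] b by blast
  next
    fix v assume "v \<in> {g ((1 - t) *\<^sub>R x + t *\<^sub>R y) |g. convex_on UNIV g \<and> (\<forall>y. g y \<le> \<psi> y)}"
    then obtain g where g: "convex_on UNIV g" "\<And>y. g y \<le> \<psi> y" and v: "v = g ((1 - t) *\<^sub>R x + t *\<^sub>R y)"
      by blast
    have "v \<le> (1 - t) * g x + t * g y"
      using convex_onD[OF g(1), of t x y] t v by auto
    also have "\<dots> \<le> (1 - t) * conv_fun \<psi> x + t * conv_fun \<psi> y"
      using conv_fun_upper[OF g, of x] conv_fun_upper[OF g, of y] t
      by (intro add_mono mult_left_mono) auto
    finally show "v \<le> (1 - t) * conv_fun \<psi> x + t * conv_fun \<psi> y" .
  qed
qed simp

lemma conv_fun_C2: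
  fixes \<psi> :: "'a::euclidean_space \<Rightarrow> real"
  assumes "\<psi> \<in> C2"
  shows "conv_fun \<psi> \<in> C2"
proof -
  obtain a k l where b: "\<And>y. l + (norm y)\<^sup>2 / 2 \<le> \<psi> y \<and> \<psi> y \<le> a + k * (norm y)\<^sup>2"
    using C2_D(3)[OF assms] by blast
  have "continuous_on UNIV (conv_fun \<psi>)"
    by (rule convex_on_continuous[OF open_UNIV conv_fun_convex[OF assms]])
  moreover have "\<forall>y. l + (norm y)\<^sup>2 / 2 \<le> conv_fun \<psi> y \<and> conv_fun \<psi> y \<le> a + k * (norm y)\<^sup>2"
    using conv_fun_lower[of l \<psi>] b conv_fun_le[OF assms] order_trans by blast
  ultimately show ?thesis unfolding C2_def by blast
qed

lemma conv_decomp: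
  fixes \<psi> :: "'a::euclidean_space \<Rightarrow> real"
  assumes psi: "\<psi> \<in> C2" and e: "0 < \<epsilon>"
  shows "\<exists>(W :: ('a \<times> real) pmf) S. finite S \<and> set_pmf W \<subseteq> S \<and>
            (\<Sum>s\<in>S. pmf W s *\<^sub>R fst s) = y \<and> (\<Sum>s\<in>S. pmf W s * \<psi> (fst s)) < conv_fun \<psi> y + \<epsilon>"
proof -
  obtain a k l where b: "\<And>y. l + (norm y)\<^sup>2 / 2 \<le> \<psi> y \<and> \<psi> y \<le> a + k * (norm y)\<^sup>2"
    using C2_D(3)[OF psi] by blast
  define E where "E = {z :: 'a \<times> real. \<psi> (fst z) \<le> snd z}"
  define H where "H = convex hull E"
  define G where "G = epigraph UNIV (\<lambda>y::'a. l + (norm y)\<^sup>2 / 2)"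
  have cG: "convex G" unfolding G_def by (rule convex_epigraphI[OF convex_half_sq])
  have EG: "E \<subseteq> G" unfolding E_def G_def epigraph_def using b order_trans by fastforce
  have HG: "H \<subseteq> G" unfolding H_def using EG cG by (rule hull_minimal)
  have cH: "convex H" unfolding H_def by (rule convex_convex_hull)
  have EH: "E \<subseteq> H" unfolding H_def by (rule hull_subset)
  define f where "f x = Inf {t. (x, t) \<in> H}" for x
  have ne: "{t. (x, t) \<in> H} \<noteq> {}" for x
  proof -
    have "(x, \<psi> x) \<in> H" using EH by (auto simp: E_def)
    then show ?thesis by auto
  qed
  have bb: "bdd_below {t. (x, t) \<in> H}" for x
    using HG by (intro bdd_belowI[where m="l + (norm x)\<^sup>2 / 2"]) (auto simp: G_def epigraph_def)
  have fle: "f x \<le> t" if "(x, t) \<in> H" for x t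
    unfolding f_def using that bb by (intro cInf_lower) auto
  have fpsi: "f x \<le> \<psi> x" for x
  proof -
    have "(x, \<psi> x) \<in> H" using EH by (auto simp: E_def)
    then show ?thesis by (rule fle)
  qed
  have fconv: "convex_on UNIV f"
  proof (rule convex_onI)
    fix t :: real and x y :: 'a
    assume t: "0 < t" "t < 1"
    show "f ((1 - t) *\<^sub>R x + t *\<^sub>R y) \<le> (1 - t) * f x + t * f y"
    proof (rule field_le_epsilon)
      fix e :: real assume e: "0 < e"
      obtain s where s: "(x, s) \<in> H" "s < f x + e"
        using cInf_lessD[OF ne[of x], of "f x + e"] e unfolding f_def by auto
      obtain r where r: "(y, r) \<in> H" "r < f y + e"
        using cInf_lessD[OF ne[of y], of "f y + e"] e unfolding f_def by auto
      have "(1 - t) *\<^sub>R (x, s) + t *\<^sub>R (y, r) \<in> H"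
        using t by (intro convexD[OF cH s(1) r(1)]) auto
      then have "f ((1 - t) *\<^sub>R x + t *\<^sub>R y) \<le> (1 - t) * s + t * r"
        by (intro fle) simp
      also have "\<dots> \<le> (1 - t) * (f x + e) + t * (f y + e)"
        using s r t by (intro add_mono mult_left_mono) auto
      also have "\<dots> = (1 - t) * f x + t * f y + e" by (simp add: algebra_simps)
      finally show "f ((1 - t) *\<^sub>R x + t *\<^sub>R y) \<le> (1 - t) * f x + t * f y + e" .
    qed
  qed simp
  have "f y \<le> conv_fun \<psi> y" by (rule conv_fun_upper[OF fconv fpsi])
  then obtain t where t: "(y, t) \<in> H" "t < conv_fun \<psi> y + \<epsilon>"
    using cInf_lessD[OF ne[of y], of "conv_fun \<psi> y + \<epsilon>"] e unfolding f_def by auto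
  then obtain S u where S: "finite S" "S \<subseteq> E" "\<forall>x\<in>S. 0 \<le> u x" "sum u S = 1"
    "(\<Sum>v\<in>S. u v *\<^sub>R v) = (y, t)"
    unfolding H_def convex_hull_explicit by blast
  define w where "w z = (if z \<in> S then u z else 0)" for z
  have w0: "0 \<le> w z" for z using S(3) unfolding w_def by auto
  have "(\<integral>\<^sup>+ z. ennreal (w z) \<partial>count_space UNIV) = (\<Sum>z\<in>S. ennreal (w z))"
    by (rule nn_integral_count_space'[OF S(1)]) (auto simp: w_def)
  also have "\<dots> = ennreal (\<Sum>z\<in>S. w z)" using w0 by (rule sum_ennreal)
  also have "(\<Sum>z\<in>S. w z) = 1" using S(4) unfolding w_def by simp
  finally have int1: "(\<integral>\<^sup>+ z. ennreal (w z) \<partial>count_space UNIV) = 1" by simp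
  define W where "W = embed_pmf w"
  have pW: "pmf W z = w z" for z unfolding W_def by (rule pmf_embed_pmf[OF w0 int1])
  have setW: "set_pmf W \<subseteq> S"
  proof
    fix z assume "z \<in> set_pmf W"
    then have "pmf W z \<noteq> 0" by (simp add: set_pmf_iff)
    then show "z \<in> S" using pW[of z] by (auto simp: w_def split: if_splits)
  qed
  have "(\<Sum>s\<in>S. pmf W s *\<^sub>R fst s) = fst (\<Sum>v\<in>S. u v *\<^sub>R v)"
    by (simp add: pW w_def fst_sum)
  also have "\<dots> = y" using S(5) by simp
  finally have bar: "(\<Sum>s\<in>S. pmf W s *\<^sub>R fst s) = y" .
  have "(\<Sum>s\<in>S. pmf W s * \<psi> (fst s)) \<le> (\<Sum>s\<in>S. u s * snd s)"
    using S(2,3) by (intro sum_mono) (auto simp: pW w_def E_def intro!: mult_left_mono)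
  also have "\<dots> = snd (\<Sum>v\<in>S. u v *\<^sub>R v)" by (simp add: snd_sum)
  also have "\<dots> = t" using S(5) by simp
  finally have "(\<Sum>s\<in>S. pmf W s * \<psi> (fst s)) < conv_fun \<psi> y + \<epsilon>" using t(2) by linarith
  with bar setW S(1) show ?thesis by blast
qed


lemma integral_bind_nonneg:
  fixes g :: "'b \<Rightarrow> real"
  assumes N: "N \<in> measurable M (subprob_algebra B)" and g: "g \<in> borel_measurable B"
    and nn: "\<And>y. 0 \<le> g y" and int: "integrable (M \<bind> N) g" and ne: "space M \<noteq> {}"
  shows "AE x in M. integrable (N x) g" "integrable M (\<lambda>x. integral\<^sup>L (N x) g)"
    "integral\<^sup>L (M \<bind> N) g = (\<integral>x. integral\<^sup>L (N x) g \<partial>M)"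
proof -
  define I where "I x = (\<integral>\<^sup>+ y. ennreal (g y) \<partial>N x)" for x
  have Im: "I \<in> borel_measurable M"
    unfolding I_def using N g by measurable
  have "(\<integral>\<^sup>+ y. ennreal (g y) \<partial>(M \<bind> N)) \<noteq> \<infinity>" using integrableD(2)[OF int] .
  moreover have bindI: "(\<integral>\<^sup>+ y. ennreal (g y) \<partial>(M \<bind> N)) = (\<integral>\<^sup>+ x. I x \<partial>M)"
    unfolding I_def by (rule nn_integral_bind[OF _ N]) (use g in measurable)
  ultimately have finI: "(\<integral>\<^sup>+ x. I x \<partial>M) \<noteq> \<infinity>" by simp
  have AEI: "AE x in M. I x \<noteq> \<infinity>" by (rule nn_integral_PInf_AE[OF Im finI])
  have gN: "g \<in> borel_measurable (N x)" if "x \<in> space M" for x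
    using g by (subst measurable_cong_sets[OF sets_kernel[OF N that] refl])
  have intN: "integrable (N x) g" and eqN: "integral\<^sup>L (N x) g = enn2real (I x)"
    if "x \<in> space M" "I x \<noteq> \<infinity>" for x
  proof -
    show "integrable (N x) g"
      using that gN[OF that(1)] nn unfolding I_def by (intro integrableI_nonneg) (auto simp: less_top)
    show "integral\<^sup>L (N x) g = enn2real (I x)"
      unfolding I_def using gN[OF that(1)] nn by (intro integral_eq_nn_integral) auto
  qed
  show "AE x in M. integrable (N x) g"
    using AEI AE_space by eventually_elim (use intN in auto)
  have iGm: "(\<lambda>x. integral\<^sup>L (N x) g) \<in> borel_measurable M"
    using N g by measurable
  have eqA: "(\<integral>\<^sup>+ x. ennreal (integral\<^sup>L (N x) g) \<partial>M) = (\<integral>\<^sup>+ x. I x \<partial>M)"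
  proof (rule nn_integral_cong_AE)
    show "AE x in M. ennreal (integral\<^sup>L (N x) g) = I x"
      using AEI AE_space by eventually_elim (use eqN in \<open>auto simp: less_top\<close>)
  qed
  show intM: "integrable M (\<lambda>x. integral\<^sup>L (N x) g)"
    using iGm eqA finI nn by (intro integrableI_nonneg) (auto simp: less_top intro!: integral_nonneg_AE)
  have "integral\<^sup>L (M \<bind> N) g = enn2real (\<integral>\<^sup>+ y. ennreal (g y) \<partial>(M \<bind> N))"
  proof (rule integral_eq_nn_integral)
    show "g \<in> borel_measurable (M \<bind> N)"
      using g by (subst measurable_cong_sets[OF sets_bind[OF sets_kernel[OF N] ne] refl])
  qed (use nn in auto)
  also have "\<dots> = enn2real (\<integral>\<^sup>+ x. ennreal (integral\<^sup>L (N x) g) \<partial>M)"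
    using bindI eqA by simp
  also have "\<dots> = (\<integral>x. integral\<^sup>L (N x) g \<partial>M)"
    using iGm nn by (intro integral_eq_nn_integral[symmetric]) (auto intro!: integral_nonneg_AE)
  finally show "integral\<^sup>L (M \<bind> N) g = (\<integral>x. integral\<^sup>L (N x) g \<partial>M)" .
qed

lemma integral_bind_real:
  fixes f :: "'b \<Rightarrow> real"
  assumes N: "N \<in> measurable M (subprob_algebra B)" and f: "f \<in> borel_measurable B"
    and int: "integrable (M \<bind> N) f" and ne: "space M \<noteq> {}"
  shows "integrable M (\<lambda>x. integral\<^sup>L (N x) f)"
    "integral\<^sup>L (M \<bind> N) f = (\<integral>x. integral\<^sup>L (N x) f \<partial>M)"
proof -
  define P where "P y = max 0 (f y)" for y
  define Q where "Q y = max 0 (- f y)" for y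
  have fPQ: "f y = P y - Q y" for y unfolding P_def Q_def by auto
  have fPQ': "f = (\<lambda>y. P y - Q y)" using fPQ by (simp add: fun_eq_iff)
  have Pm: "P \<in> borel_measurable B" and Qm: "Q \<in> borel_measurable B"
    unfolding P_def Q_def using f by measurable
  have sb: "sets (M \<bind> N) = sets B" by (rule sets_bind[OF sets_kernel[OF N] ne])
  have intP: "integrable (M \<bind> N) P" unfolding P_def using int by (intro integrable_max) auto
  have intQ: "integrable (M \<bind> N) Q" unfolding Q_def using int by (intro integrable_max) auto
  note RP = integral_bind_nonneg[OF N Pm _ intP ne] and RQ = integral_bind_nonneg[OF N Qm _ intQ ne]
  have P0: "0 \<le> P y" and Q0: "0 \<le> Q y" for y unfolding P_def Q_def by auto
  have AEeq: "AE x in M. integral\<^sup>L (N x) f = integral\<^sup>L (N x) P - integral\<^sup>L (N x) Q"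
    using RP(1)[OF P0] RQ(1)[OF Q0]
  proof eventually_elim
    case (elim x)
    have "integral\<^sup>L (N x) f = integral\<^sup>L (N x) (\<lambda>y. P y - Q y)" by (simp only: fPQ')
    also have "\<dots> = integral\<^sup>L (N x) P - integral\<^sup>L (N x) Q"
      using elim by (rule Bochner_Integration.integral_diff)
    finally show ?case .
  qed
  have m1: "(\<lambda>x. integral\<^sup>L (N x) f) \<in> borel_measurable M" using N f by measurable
  have m2: "(\<lambda>x. integral\<^sup>L (N x) P - integral\<^sup>L (N x) Q) \<in> borel_measurable M" using N Pm Qm by measurable
  have i2: "integrable M (\<lambda>x. integral\<^sup>L (N x) P - integral\<^sup>L (N x) Q)"
    using RP(2)[OF P0] RQ(2)[OF Q0] by (rule Bochner_Integration.integrable_diff)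
  show "integrable M (\<lambda>x. integral\<^sup>L (N x) f)"
    using integrable_cong_AE[OF m1 m2 AEeq] i2 by simp
  have "(\<integral>x. integral\<^sup>L (N x) f \<partial>M) = (\<integral>x. integral\<^sup>L (N x) P - integral\<^sup>L (N x) Q \<partial>M)"
    by (rule integral_cong_AE[OF m1 m2 AEeq])
  also have "\<dots> = (\<integral>x. integral\<^sup>L (N x) P \<partial>M) - (\<integral>x. integral\<^sup>L (N x) Q \<partial>M)"
    using RP(2)[OF P0] RQ(2)[OF Q0] by (rule Bochner_Integration.integral_diff)
  also have "\<dots> = integral\<^sup>L (M \<bind> N) P - integral\<^sup>L (M \<bind> N) Q"
    using RP(3)[OF P0] RQ(3)[OF Q0] by simp
  also have "\<dots> = integral\<^sup>L (M \<bind> N) (\<lambda>y. P y - Q y)"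
    using intP intQ by (rule Bochner_Integration.integral_diff[symmetric])
  also have "\<dots> = integral\<^sup>L (M \<bind> N) f" by (simp only: fPQ')
  finally show "integral\<^sup>L (M \<bind> N) f = (\<integral>x. integral\<^sup>L (N x) f \<partial>M)" ..
qed


lemma inner_half_bound:
  fixes y z :: "'a::real_inner"
  shows "\<bar>y \<bullet> z\<bar> \<le> ((norm y)\<^sup>2 + (norm z)\<^sup>2) / 2"
proof -
  have a: "(norm (y - z))\<^sup>2 = (norm y)\<^sup>2 - 2 * (y \<bullet> z) + (norm z)\<^sup>2"
    unfolding power2_norm_eq_inner by (simp add: inner_diff_left inner_diff_right inner_commute)
  have b: "(norm (y + z))\<^sup>2 = (norm y)\<^sup>2 + 2 * (y \<bullet> z) + (norm z)\<^sup>2"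
    unfolding power2_norm_eq_inner by (simp add: inner_add_left inner_add_right inner_commute)
  have "0 \<le> (norm (y - z))\<^sup>2" "0 \<le> (norm (y + z))\<^sup>2" by auto
  then show ?thesis unfolding a b by (simp add: abs_le_iff)
qed

lemma Cpl_D:
  assumes "\<pi> \<in> Cpl \<rho> \<sigma>"
  shows "prob_space \<pi>" "sets \<pi> = sets (borel \<Otimes>\<^sub>M borel)" "distr \<pi> borel fst = \<rho>" "distr \<pi> borel snd = \<sigma>"
  using assms unfolding Cpl_def by auto

lemma Cpl_meas:
  fixes f :: "'a::euclidean_space \<times> 'a \<Rightarrow> 'b::topological_space"
  assumes "\<pi> \<in> Cpl \<rho> \<sigma>" "f \<in> borel_measurable (borel \<Otimes>\<^sub>M borel)"
  shows "f \<in> borel_measurable \<pi>"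
  using assms(2) by (subst measurable_cong_sets[OF Cpl_D(2)[OF assms(1)] refl])

lemma Cpl_integrable:
  fixes \<rho> \<sigma> :: "'a::euclidean_space measure"
  assumes r: "\<rho> \<in> P2" and s: "\<sigma> \<in> P2" and pi: "\<pi> \<in> Cpl \<rho> \<sigma>"
  shows "integrable \<pi> (\<lambda>(y, z). inner y z)"
    "integral\<^sup>L \<pi> (\<lambda>(y, z). inner y z) \<le> ((\<integral>y. (norm y)\<^sup>2 \<partial>\<rho>) + (\<integral>z. (norm z)\<^sup>2 \<partial>\<sigma>)) / 2"
proof -
  interpret prob_space \<pi> by (rule Cpl_D(1)[OF pi])
  have fm: "fst \<in> measurable \<pi> borel" by (rule Cpl_meas[OF pi]) simp
  have sm: "snd \<in> measurable \<pi> borel" by (rule Cpl_meas[OF pi]) simp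
  have i1: "integrable \<pi> (\<lambda>w. (norm (fst w))\<^sup>2)"
    using integrable_distr_eq[OF fm, of "\<lambda>y. (norm y)\<^sup>2"] P2_D(4)[OF r] Cpl_D(3)[OF pi] by simp
  have i2: "integrable \<pi> (\<lambda>w. (norm (snd w))\<^sup>2)"
    using integrable_distr_eq[OF sm, of "\<lambda>y. (norm y)\<^sup>2"] P2_D(4)[OF s] Cpl_D(4)[OF pi] by simp
  have e1: "(\<integral>w. (norm (fst w))\<^sup>2 \<partial>\<pi>) = (\<integral>y. (norm y)\<^sup>2 \<partial>\<rho>)"
    using integral_distr[OF fm, of "\<lambda>y. (norm y)\<^sup>2"] Cpl_D(3)[OF pi] by simp
  have e2: "(\<integral>w. (norm (snd w))\<^sup>2 \<partial>\<pi>) = (\<integral>z. (norm z)\<^sup>2 \<partial>\<sigma>)"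
    using integral_distr[OF sm, of "\<lambda>y. (norm y)\<^sup>2"] Cpl_D(4)[OF pi] by simp
  have ih: "integrable \<pi> (\<lambda>w. ((norm (fst w))\<^sup>2 + (norm (snd w))\<^sup>2) / 2)"
    using i1 i2 by auto
  have mm: "(\<lambda>(y, z). inner y z) \<in> borel_measurable \<pi>"
    by (rule Cpl_meas[OF pi]) simp
  have bd: "norm ((\<lambda>(y, z). inner y z) w) \<le> norm (((norm (fst w))\<^sup>2 + (norm (snd w))\<^sup>2) / 2)" for w :: "'a \<times> 'a"
    using inner_half_bound[of "fst w" "snd w"] by (cases w) auto
  show ii: "integrable \<pi> (\<lambda>(y, z). inner y z)"
    by (rule Bochner_Integration.integrable_bound[OF ih mm AE_I2[OF bd]])
  have "integral\<^sup>L \<pi> (\<lambda>(y, z). inner y z) \<le> (\<integral>w. ((norm (fst w))\<^sup>2 + (norm (snd w))\<^sup>2) / 2 \<partial>\<pi>)"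
  proof (rule integral_mono[OF ii ih])
    fix w :: "'a \<times> 'a"
    show "(case w of (y, z) \<Rightarrow> y \<bullet> z) \<le> ((norm (fst w))\<^sup>2 + (norm (snd w))\<^sup>2) / 2"
      using inner_half_bound[of "fst w" "snd w"] by (cases w) auto
  qed
  also have "\<dots> = ((\<integral>y. (norm y)\<^sup>2 \<partial>\<rho>) + (\<integral>z. (norm z)\<^sup>2 \<partial>\<sigma>)) / 2"
    using i1 i2 e1 e2 by simp
  finally show "integral\<^sup>L \<pi> (\<lambda>(y, z). inner y z) \<le> ((\<integral>y. (norm y)\<^sup>2 \<partial>\<rho>) + (\<integral>z. (norm z)\<^sup>2 \<partial>\<sigma>)) / 2" .
qed

lemma Cpl_nonempty:
  fixes \<rho> \<sigma> :: "'a::euclidean_space measure"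
  assumes r: "\<rho> \<in> P2" and s: "\<sigma> \<in> P2"
  shows "\<rho> \<Otimes>\<^sub>M \<sigma> \<in> Cpl \<rho> \<sigma>"
proof -
  interpret R: prob_space \<rho> using P2_D[OF r] by simp
  interpret S: prob_space \<sigma> using P2_D[OF s] by simp
  interpret pair_prob_space \<rho> \<sigma> ..
  have "distr (\<rho> \<Otimes>\<^sub>M \<sigma>) borel fst = distr (\<rho> \<Otimes>\<^sub>M \<sigma>) \<rho> fst"
    by (rule distr_cong) (auto simp: P2_D(2)[OF r])
  also have "\<dots> = \<rho>" by (rule S.distr_pair_fst)
  finally have 1: "distr (\<rho> \<Otimes>\<^sub>M \<sigma>) borel fst = \<rho>" .
  have "distr (\<rho> \<Otimes>\<^sub>M \<sigma>) borel snd = \<sigma>"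
  proof (rule measure_eqI)
    show "sets (distr (\<rho> \<Otimes>\<^sub>M \<sigma>) borel snd) = sets \<sigma>" using P2_D(2)[OF s] by simp
  next
    fix A assume "A \<in> sets (distr (\<rho> \<Otimes>\<^sub>M \<sigma>) borel snd)"
    then have A: "A \<in> sets borel" by simp
    then have A': "A \<in> sets \<sigma>" using P2_D(2)[OF s] by simp
    have "emeasure (distr (\<rho> \<Otimes>\<^sub>M \<sigma>) borel snd) A = emeasure (\<rho> \<Otimes>\<^sub>M \<sigma>) (snd -` A \<inter> space (\<rho> \<Otimes>\<^sub>M \<sigma>))"
      using A by (intro emeasure_distr)
        (auto simp: measurable_cong_sets[OF sets_pair_measure_cong[OF P2_D(2)[OF r] P2_D(2)[OF s]] refl])
    also have "snd -` A \<inter> space (\<rho> \<Otimes>\<^sub>M \<sigma>) = space \<rho> \<times> A"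
      using sets.sets_into_space[OF A'] by (auto simp: space_pair_measure)
    also have "emeasure (\<rho> \<Otimes>\<^sub>M \<sigma>) (space \<rho> \<times> A) = emeasure \<rho> (space \<rho>) * emeasure \<sigma> A"
      using A' by (intro S.emeasure_pair_measure_Times) auto
    also have "\<dots> = emeasure \<sigma> A" by (simp add: R.emeasure_space_1)
    finally show "emeasure (distr (\<rho> \<Otimes>\<^sub>M \<sigma>) borel snd) A = emeasure \<sigma> A" .
  qed
  moreover have "sets (\<rho> \<Otimes>\<^sub>M \<sigma>) = sets (borel \<Otimes>\<^sub>M borel)"
    by (rule sets_pair_measure_cong[OF P2_D(2)[OF r] P2_D(2)[OF s]])
  moreover have "prob_space (\<rho> \<Otimes>\<^sub>M \<sigma>)" by (rule prob_space_pair) unfold_locales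
  ultimately show ?thesis using 1 unfolding Cpl_def by blast
qed

lemma MCov_facts:
  fixes \<rho> \<sigma> :: "'a::euclidean_space measure"
  assumes r: "\<rho> \<in> P2" and s: "\<sigma> \<in> P2"
  shows "bdd_above ((\<lambda>\<pi>. integral\<^sup>L \<pi> (\<lambda>(y, z). inner y z)) ` Cpl \<rho> \<sigma>)"
    "MCov \<rho> \<sigma> \<le> ((\<integral>y. (norm y)\<^sup>2 \<partial>\<rho>) + (\<integral>z. (norm z)\<^sup>2 \<partial>\<sigma>)) / 2"
    "\<pi> \<in> Cpl \<rho> \<sigma> \<Longrightarrow> integral\<^sup>L \<pi> (\<lambda>(y, z). inner y z) \<le> MCov \<rho> \<sigma>"
proof -
  show bd: "bdd_above ((\<lambda>\<pi>. integral\<^sup>L \<pi> (\<lambda>(y, z). inner y z)) ` Cpl \<rho> \<sigma>)"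
    using Cpl_integrable(2)[OF r s] by (intro bdd_aboveI) blast
  show "MCov \<rho> \<sigma> \<le> ((\<integral>y. (norm y)\<^sup>2 \<partial>\<rho>) + (\<integral>z. (norm z)\<^sup>2 \<partial>\<sigma>)) / 2"
    unfolding MCov_def using Cpl_nonempty[OF r s] Cpl_integrable(2)[OF r s]
    by (intro cSUP_least) auto
  show "\<pi> \<in> Cpl \<rho> \<sigma> \<Longrightarrow> integral\<^sup>L \<pi> (\<lambda>(y, z). inner y z) \<le> MCov \<rho> \<sigma>"
    unfolding MCov_def using bd by (intro cSUP_upper) auto
qed

lemma C2_lower_integral:
  fixes \<psi> :: "'a::euclidean_space \<Rightarrow> real"
  assumes psi: "\<psi> \<in> C2" and p: "p \<in> P2" and l: "\<And>y. l + (norm y)\<^sup>2 / 2 \<le> \<psi> y"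
  shows "l + (\<integral>y. (norm y)\<^sup>2 \<partial>p) / 2 \<le> integral\<^sup>L p \<psi>"
proof -
  interpret prob_space p using P2_D[OF p] by simp
  have "(\<integral>y. l + (norm y)\<^sup>2 / 2 \<partial>p) \<le> integral\<^sup>L p \<psi>"
    using P2_D(4)[OF p] C2_integrable[OF psi p] l by (intro integral_mono) auto
  moreover have "(\<integral>y. l + (norm y)\<^sup>2 / 2 \<partial>p) = l + (\<integral>y. (norm y)\<^sup>2 \<partial>p) / 2"
    using P2_D(4)[OF p] prob_space.prob_space[OF P2_D(1)[OF p]] by simp
  ultimately show ?thesis by simp
qed

lemma phi_term_lower:
  fixes \<psi> :: "'a::euclidean_space \<Rightarrow> real"
  assumes psi: "\<psi> \<in> C2" and p: "p \<in> P2" and q: "q \<in> P2" and l: "\<And>y. l + (norm y)\<^sup>2 / 2 \<le> \<psi> y"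
  shows "l - (\<integral>z. (norm z)\<^sup>2 \<partial>q) / 2 \<le> integral\<^sup>L p \<psi> - MCov p q"
  using C2_lower_integral[OF psi p l] MCov_facts(2)[OF p q] by simp


lemma pred_open_mem:
  fixes U :: "'a::euclidean_space set"
  assumes "open U"
  shows "Measurable.pred borel (\<lambda>y. y \<in> U)"
proof -
  have "U \<in> sets borel" using assms by simp
  then show ?thesis by (simp add: pred_def)
qed

lemma kernel_exists:
  fixes \<psi> :: "'a::euclidean_space \<Rightarrow> real"
  assumes psi: "\<psi> \<in> C2" and e: "0 < \<epsilon>"
  shows "\<exists>K :: 'a \<Rightarrow> 'a measure. K \<in> measurable borel (subprob_algebra borel) \<and>
     (\<forall>y. prob_space (K y) \<and> sets (K y) = sets borel \<and>
        (\<forall>f::'a \<Rightarrow> real. f \<in> borel_measurable borel \<longrightarrow> integrable (K y) f) \<and>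
        (\<forall>b. integral\<^sup>L (K y) (\<lambda>v. v \<bullet> b) = y \<bullet> b) \<and>
        integral\<^sup>L (K y) \<psi> \<le> conv_fun \<psi> y + \<epsilon>)"
proof -
  have "\<forall>c. \<exists>WS :: ('a \<times> real) pmf \<times> ('a \<times> real) set. finite (snd WS) \<and> set_pmf (fst WS) \<subseteq> snd WS \<and>
            (\<Sum>s\<in>snd WS. pmf (fst WS) s *\<^sub>R fst s) = c \<and>
            (\<Sum>s\<in>snd WS. pmf (fst WS) s * \<psi> (fst s)) < conv_fun \<psi> c + \<epsilon> / 2"
    using conv_decomp[OF psi, of "\<epsilon> / 2"] e by auto
  from choice[OF this] obtain WS :: "'a \<Rightarrow> ('a \<times> real) pmf \<times> ('a \<times> real) set" where WS: "\<forall>c. finite (snd (WS c)) \<and> set_pmf (fst (WS c)) \<subseteq> snd (WS c) \<and>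
            (\<Sum>s\<in>snd (WS c). pmf (fst (WS c)) s *\<^sub>R fst s) = c \<and>
            (\<Sum>s\<in>snd (WS c). pmf (fst (WS c)) s * \<psi> (fst s)) < conv_fun \<psi> c + \<epsilon> / 2"
    by blast
  define Wf where "Wf c = fst (WS c)" for c
  define Sf where "Sf c = snd (WS c)" for c
  have Sfin: "finite (Sf c)" and Wsub: "set_pmf (Wf c) \<subseteq> Sf c"
    and Wbar: "(\<Sum>s\<in>Sf c. pmf (Wf c) s *\<^sub>R fst s) = c"
    and Wpsi: "(\<Sum>s\<in>Sf c. pmf (Wf c) s * \<psi> (fst s)) < conv_fun \<psi> c + \<epsilon> / 2" for c
    using WS unfolding Wf_def Sf_def by auto
  have Wsum: "(\<Sum>s\<in>Sf c. pmf (Wf c) s) = 1" for c by (rule sum_pmf_eq_1[OF Sfin Wsub])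
  have psic: "continuous_on UNIV \<psi>" by (rule C2_D(2)[OF psi])
  have convc: "continuous_on UNIV (conv_fun \<psi>)" by (rule C2_D(2)[OF conv_fun_C2[OF psi]])
  define g where "g c y = (\<Sum>s\<in>Sf c. pmf (Wf c) s * \<psi> (fst s + (y - c))) - conv_fun \<psi> y" for c y
  define U where "U c = {y. g c y < \<epsilon>}" for c
  have gc: "continuous_on UNIV (g c)" for c
    unfolding g_def
    by (intro continuous_intros continuous_on_compose2[OF psic] convc) auto
  have Uopen: "open (U c)" for c
    unfolding U_def by (rule open_Collect_less[OF gc]) simp
  have cU: "c \<in> U c" for c
    using Wpsi[of c] e unfolding U_def g_def by simp
  obtain F' where F': "F' \<subseteq> range U" "countable F'" "\<Union>F' = \<Union>(range U)"
    using Lindelof[of "range U"] Uopen by blast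
  obtain C where C: "countable C" "F' = U ` C"
    using countable_subset_image[of F' U UNIV] F'(1,2) by blast
  have UC: "\<Union>(U ` C) = UNIV" using F'(3) C(2) cU by auto
  then have Cne: "C \<noteq> {}" by auto
  define cs where "cs = from_nat_into C"
  have rcs: "range cs = C" unfolding cs_def by (rule range_from_nat_into[OF Cne C(1)])
  have exn: "\<exists>n. y \<in> U (cs n)" for y
  proof -
    obtain c where "c \<in> C" "y \<in> U c" using UC by blast
    then show ?thesis using rcs by (metis rangeE)
  qed
  define N where "N y = (LEAST n. y \<in> U (cs n))" for y
  have yN: "y \<in> U (cs (N y))" for y
    unfolding N_def by (rule LeastI_ex[OF exn])
  have Nm: "N \<in> measurable borel (count_space UNIV)"
    unfolding N_def by (intro measurable_Least pred_open_mem Uopen)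
  define F where "F n y = distr (measure_pmf (Wf (cs n))) borel (\<lambda>s. fst s + (y - cs n))" for n y
  define K where "K y = F (N y) y" for y
  have Fm: "(\<lambda>y. F n y) \<in> measurable borel (subprob_algebra borel)" for n
    unfolding F_def
  proof (rule measurable_distr2[where M="measure_pmf (Wf (cs n))"])
    show "(\<lambda>y. measure_pmf (Wf (cs n))) \<in> borel \<rightarrow>\<^sub>M subprob_algebra (measure_pmf (Wf (cs n)))"
      by (rule measurable_const) (auto simp: space_subprob_algebra intro: prob_space_imp_subprob_space prob_space_measure_pmf)
    have m1: "(\<lambda>w. fst w) \<in> borel \<Otimes>\<^sub>M measure_pmf (Wf (cs n)) \<rightarrow>\<^sub>M borel"
      by (rule measurable_fst)
    have m2: "(\<lambda>w. fst (snd w)) \<in> borel \<Otimes>\<^sub>M measure_pmf (Wf (cs n)) \<rightarrow>\<^sub>M (borel :: 'a measure)"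
      by (rule measurable_compose[OF measurable_snd]) simp
    have "(\<lambda>w. fst (snd w) + (fst w - cs n)) \<in> borel \<Otimes>\<^sub>M measure_pmf (Wf (cs n)) \<rightarrow>\<^sub>M borel"
      by (intro borel_measurable_add borel_measurable_diff m1 m2 borel_measurable_const)
    then show "(\<lambda>(y, s). fst s + (y - cs n)) \<in> borel \<Otimes>\<^sub>M measure_pmf (Wf (cs n)) \<rightarrow>\<^sub>M borel"
      by (simp add: case_prod_beta')
  qed
  have Km: "K \<in> measurable borel (subprob_algebra borel)"
    unfolding K_def by (rule measurable_compose_countable'[OF Fm Nm]) simp_all
  have Kprop: "prob_space (K y) \<and> sets (K y) = sets borel \<and>
        (\<forall>f::'a \<Rightarrow> real. f \<in> borel_measurable borel \<longrightarrow> integrable (K y) f) \<and>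
        (\<forall>b. integral\<^sup>L (K y) (\<lambda>v. v \<bullet> b) = y \<bullet> b) \<and>
        integral\<^sup>L (K y) \<psi> \<le> conv_fun \<psi> y + \<epsilon>" for y
  proof -
    define c where "c = cs (N y)"
    have Ky: "K y = distr (measure_pmf (Wf c)) borel (\<lambda>s. fst s + (y - c))"
      unfolding K_def F_def c_def ..
    have tm: "(\<lambda>s. fst s + (y - c)) \<in> measurable (measure_pmf (Wf c)) borel" by simp
    have fin: "finite (set_pmf (Wf c))" using Sfin Wsub finite_subset by blast
    have intf: "integrable (K y) f" if "f \<in> borel_measurable borel" for f :: "'a \<Rightarrow> real"
      unfolding Ky using integrable_distr_eq[OF tm that] integrable_measure_pmf_finite[OF fin] by simp
    have intE: "integral\<^sup>L (K y) f = (\<Sum>s\<in>Sf c. f (fst s + (y - c)) * pmf (Wf c) s)"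
      if "f \<in> borel_measurable borel" for f :: "'a \<Rightarrow> real"
    proof -
      have "integral\<^sup>L (K y) f = (\<integral>s. f (fst s + (y - c)) \<partial>measure_pmf (Wf c))"
        unfolding Ky by (rule integral_distr[OF tm that])
      also have "\<dots> = (\<Sum>s\<in>Sf c. f (fst s + (y - c)) * pmf (Wf c) s)"
        by (rule integral_measure_pmf_real[OF Sfin]) (use Wsub in auto)
      finally show ?thesis .
    qed
    have "prob_space (K y)" unfolding Ky by (rule prob_space.prob_space_distr) (auto simp: prob_space_measure_pmf)
    moreover have "sets (K y) = sets borel" unfolding Ky by simp
    moreover have "integral\<^sup>L (K y) (\<lambda>v. v \<bullet> b) = y \<bullet> b" for b
    proof -
      have "integral\<^sup>L (K y) (\<lambda>v. v \<bullet> b) = (\<Sum>s\<in>Sf c. ((fst s + (y - c)) \<bullet> b) * pmf (Wf c) s)"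
        by (rule intE) simp
      also have "\<dots> = (\<Sum>s\<in>Sf c. pmf (Wf c) s * (fst s \<bullet> b)) + (\<Sum>s\<in>Sf c. pmf (Wf c) s) * ((y - c) \<bullet> b)"
      proof -
        have "(\<Sum>s\<in>Sf c. ((fst s + (y - c)) \<bullet> b) * pmf (Wf c) s)
            = (\<Sum>s\<in>Sf c. pmf (Wf c) s * (fst s \<bullet> b) + pmf (Wf c) s * ((y - c) \<bullet> b))"
          by (rule sum.cong) (simp_all add: inner_add_left ring_distribs)
        also have "\<dots> = (\<Sum>s\<in>Sf c. pmf (Wf c) s * (fst s \<bullet> b)) + (\<Sum>s\<in>Sf c. pmf (Wf c) s) * ((y - c) \<bullet> b)"
          by (simp only: sum.distrib sum_distrib_right)
        finally show ?thesis .
      qed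
      also have "(\<Sum>s\<in>Sf c. pmf (Wf c) s * (fst s \<bullet> b)) = (\<Sum>s\<in>Sf c. pmf (Wf c) s *\<^sub>R fst s) \<bullet> b"
        by (simp add: inner_sum_left)
      also have "\<dots> = c \<bullet> b" using Wbar[of c] by simp
      finally show ?thesis using Wsum[of c] by (simp add: inner_diff_left)
    qed
    moreover have "integral\<^sup>L (K y) \<psi> \<le> conv_fun \<psi> y + \<epsilon>"
    proof -
      have "integral\<^sup>L (K y) \<psi> = (\<Sum>s\<in>Sf c. \<psi> (fst s + (y - c)) * pmf (Wf c) s)"
        by (rule intE[OF C2_D(1)[OF psi]])
      also have "\<dots> = g c y + conv_fun \<psi> y" unfolding g_def by (simp add: mult.commute)
      finally show ?thesis using yN[of y] unfolding U_def c_def by simp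
    qed
    ultimately show ?thesis using intf by blast
  qed
  show ?thesis using Km Kprop by blast
qed


lemma main_step:
  fixes \<psi> :: "'a::euclidean_space \<Rightarrow> real"
  assumes psi: "\<psi> \<in> C2" and q: "q \<in> P2" and pb: "p \<in> P2_bary x" and e: "0 < \<epsilon>"
  shows "\<exists>p' \<in> P2_bary x. integral\<^sup>L p' \<psi> \<le> integral\<^sup>L p (conv_fun \<psi>) + \<epsilon> \<and> MCov p q \<le> MCov p' q"
proof -
  obtain K :: "'a \<Rightarrow> 'a measure" where Km: "K \<in> measurable borel (subprob_algebra borel)"
    and Kp: "\<And>y. prob_space (K y)" "\<And>y. sets (K y) = sets borel"
    and Ki: "\<And>y f. f \<in> borel_measurable borel \<Longrightarrow> integrable (K y) (f :: 'a \<Rightarrow> real)"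
    and Kb: "\<And>y b. integral\<^sup>L (K y) (\<lambda>v. v \<bullet> b) = y \<bullet> b"
    and Kpsi: "\<And>y. integral\<^sup>L (K y) \<psi> \<le> conv_fun \<psi> y + \<epsilon>"
    using kernel_exists[OF psi e] by blast
  obtain a k l where b: "\<And>y. l + (norm y)\<^sup>2 / 2 \<le> \<psi> y \<and> \<psi> y \<le> a + k * (norm y)\<^sup>2"
    using C2_D(3)[OF psi] by blast
  have p: "p \<in> P2" and px: "integral\<^sup>L p (\<lambda>y. y) = x" using pb unfolding P2_bary_def by auto
  interpret P: prob_space p using P2_D(1)[OF p] .
  have nep: "space p \<noteq> {}" using P2_D(3)[OF p] by simp
  have Kpm: "K \<in> measurable p (subprob_algebra borel)"
    using Km by (subst measurable_cong_sets[OF P2_D(2)[OF p] refl])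
  define p' where "p' = p \<bind> K"
  have sp': "sets p' = sets borel" unfolding p'_def by (rule sets_bind[OF sets_kernel[OF Kpm] nep])
  have pp': "prob_space p'" unfolding p'_def by (rule P.prob_space_bind[OF AE_I2[OF Kp(1)] Kpm])
  have sqm: "(\<lambda>v::'a. (norm v)\<^sup>2) \<in> borel_measurable borel" by simp
  have K2: "integral\<^sup>L (K y) (\<lambda>v. (norm v)\<^sup>2) \<le> 2 * (a + \<epsilon> - l) + 2 * k * (norm y)\<^sup>2" for y
  proof -
    interpret KP: prob_space "K y" by (rule Kp(1))
    have "(\<integral>v. l + (norm v)\<^sup>2 / 2 \<partial>K y) \<le> integral\<^sup>L (K y) \<psi>"
      using b by (intro integral_mono Ki C2_D(1)[OF psi]) auto
    moreover have "(\<integral>v. l + (norm v)\<^sup>2 / 2 \<partial>K y) = l + integral\<^sup>L (K y) (\<lambda>v. (norm v)\<^sup>2) / 2"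
      using Ki[OF sqm, of y] KP.prob_space by simp
    moreover have "integral\<^sup>L (K y) \<psi> \<le> a + k * (norm y)\<^sup>2 + \<epsilon>"
      using Kpsi[of y] conv_fun_le[OF psi, of y] b[of y] by linarith
    ultimately show ?thesis by (simp add: algebra_simps)
  qed
  have K2nn: "0 \<le> 2 * (a + \<epsilon> - l) + 2 * k * (norm y)\<^sup>2" for y :: 'a
  proof -
    have "0 \<le> integral\<^sup>L (K y) (\<lambda>v. (norm v)\<^sup>2)" by (rule integral_nonneg_AE) simp
    then show ?thesis using K2[of y] by linarith
  qed
  have int_bd: "integrable p (\<lambda>y. 2 * (a + \<epsilon> - l) + 2 * k * (norm y)\<^sup>2)"
    using P2_D(4)[OF p] by auto
  have "(\<integral>\<^sup>+ v. ennreal ((norm v)\<^sup>2) \<partial>p') = (\<integral>\<^sup>+ y. (\<integral>\<^sup>+ v. ennreal ((norm v)\<^sup>2) \<partial>K y) \<partial>p)"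
    unfolding p'_def by (rule nn_integral_bind[OF _ Kpm]) simp
  also have "\<dots> = (\<integral>\<^sup>+ y. ennreal (integral\<^sup>L (K y) (\<lambda>v. (norm v)\<^sup>2)) \<partial>p)"
    by (intro nn_integral_cong nn_integral_eq_integral Ki[OF sqm]) auto
  also have "\<dots> \<le> (\<integral>\<^sup>+ y. ennreal (2 * (a + \<epsilon> - l) + 2 * k * (norm y)\<^sup>2) \<partial>p)"
    by (intro nn_integral_mono ennreal_leI K2)
  also have "\<dots> = ennreal (\<integral>y. 2 * (a + \<epsilon> - l) + 2 * k * (norm y)\<^sup>2 \<partial>p)"
    by (intro nn_integral_eq_integral int_bd AE_I2 K2nn)
  also have "\<dots> < \<infinity>" by simp
  finally have fin2: "(\<integral>\<^sup>+ v. ennreal ((norm v)\<^sup>2) \<partial>p') < \<infinity>" .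
  have i2: "integrable p' (\<lambda>v. (norm v)\<^sup>2)"
    by (rule integrableI_nonneg[OF _ _ fin2]) (auto simp: measurable_cong_sets[OF sp' refl])
  have p'P2: "p' \<in> P2" unfolding P2_def using pp' sp' i2 by blast
  have bar: "integral\<^sup>L p' (\<lambda>v. v) = x"
  proof (rule euclidean_eqI)
    fix bb :: 'a assume "bb \<in> Basis"
    have "integral\<^sup>L p' (\<lambda>v. v) \<bullet> bb = (\<integral>v. v \<bullet> bb \<partial>p')"
      using P2_integrable_id[OF p'P2] by simp
    also have "\<dots> = (\<integral>y. integral\<^sup>L (K y) (\<lambda>v. v \<bullet> bb) \<partial>p)"
      unfolding p'_def by (rule integral_bind_real(2)[OF Kpm _ _ nep])
        (use P2_integrable_inner[OF p'P2, of bb] in \<open>simp_all add: p'_def\<close>)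
    also have "\<dots> = (\<integral>y. y \<bullet> bb \<partial>p)" by (simp add: Kb)
    also have "\<dots> = x \<bullet> bb" using P2_integrable_id[OF p] px by simp
    finally show "integral\<^sup>L p' (\<lambda>v. v) \<bullet> bb = x \<bullet> bb" .
  qed
  have p'b: "p' \<in> P2_bary x" unfolding P2_bary_def using p'P2 bar by blast
  have ipsi: "integrable (p \<bind> K) \<psi>" using C2_integrable[OF psi p'P2] unfolding p'_def .
  have "integral\<^sup>L p' \<psi> = (\<integral>y. integral\<^sup>L (K y) \<psi> \<partial>p)"
    unfolding p'_def by (rule integral_bind_real(2)[OF Kpm C2_D(1)[OF psi] ipsi nep])
  also have "\<dots> \<le> (\<integral>y. conv_fun \<psi> y + \<epsilon> \<partial>p)"
    by (intro integral_mono integral_bind_real(1)[OF Kpm C2_D(1)[OF psi] ipsi nep] Kpsi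
        Bochner_Integration.integrable_add C2_integrable[OF conv_fun_C2[OF psi] p]) auto
  also have "\<dots> = integral\<^sup>L p (conv_fun \<psi>) + \<epsilon>"
    using C2_integrable[OF conv_fun_C2[OF psi] p] P.prob_space by simp
  finally have psi_le: "integral\<^sup>L p' \<psi> \<le> integral\<^sup>L p (conv_fun \<psi>) + \<epsilon>" .
  have cov: "MCov p q \<le> MCov p' q"
    unfolding MCov_def[of p q]
  proof (rule cSUP_least)
    show "Cpl p q \<noteq> {}" using Cpl_nonempty[OF p q] by blast
  next
    fix \<pi> assume pi: "\<pi> \<in> Cpl p q"
    interpret PI: prob_space \<pi> by (rule Cpl_D(1)[OF pi])
    have nepi: "space \<pi> \<noteq> {}" by (rule PI.not_empty)
    define L where "L w = distr (K (fst w)) (borel \<Otimes>\<^sub>M borel) (\<lambda>v. (v, snd w))" for w :: "'a \<times> 'a"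
    have Lm0: "L \<in> measurable (borel \<Otimes>\<^sub>M borel) (subprob_algebra (borel \<Otimes>\<^sub>M borel))"
      unfolding L_def
    proof (rule measurable_distr2[where M=borel])
      show "(\<lambda>w. K (fst w)) \<in> borel \<Otimes>\<^sub>M borel \<rightarrow>\<^sub>M subprob_algebra borel"
        by (rule measurable_compose[OF measurable_fst Km])
      show "(\<lambda>(w, v). (v, snd w)) \<in> (borel \<Otimes>\<^sub>M borel) \<Otimes>\<^sub>M borel \<rightarrow>\<^sub>M (borel \<Otimes>\<^sub>M borel :: ('a \<times> 'a) measure)"
        by measurable
    qed
    have Lm: "L \<in> measurable \<pi> (subprob_algebra (borel \<Otimes>\<^sub>M borel))"
      using Lm0 by (subst measurable_cong_sets[OF Cpl_D(2)[OF pi] refl])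
    have fstm: "fst \<in> measurable \<pi> borel" by (rule Cpl_meas[OF pi]) simp
    have sndm: "snd \<in> measurable \<pi> borel" by (rule Cpl_meas[OF pi]) simp
    define \<pi>' where "\<pi>' = \<pi> \<bind> L"
    have pairm: "(\<lambda>v. (v, z)) \<in> measurable (K y) (borel \<Otimes>\<^sub>M borel)" for y z :: 'a
      by (subst measurable_cong_sets[OF Kp(2) refl]) simp
    have LK: "distr (L w) borel fst = K (fst w)" for w
    proof -
      have "distr (L w) borel fst = distr (K (fst w)) borel (fst \<circ> (\<lambda>v. (v, snd w)))"
        unfolding L_def by (rule distr_distr[OF measurable_fst pairm])
      also have "\<dots> = distr (K (fst w)) borel (\<lambda>v. v)" by (simp add: comp_def)
      also have "\<dots> = K (fst w)" by (rule distr_id2[OF Kp(2)[symmetric]])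
      finally show ?thesis .
    qed
    have LS: "distr (L w) borel snd = return borel (snd w)" for w
    proof -
      have "distr (L w) borel snd = distr (K (fst w)) borel (snd \<circ> (\<lambda>v. (v, snd w)))"
        unfolding L_def by (rule distr_distr[OF measurable_snd pairm])
      also have "\<dots> = distr (K (fst w)) borel (\<lambda>v. snd w)" by (simp add: comp_def)
      also have "\<dots> = return borel (snd w)" by (rule prob_space.distr_const[OF Kp(1)]) simp
      finally show ?thesis .
    qed
    have m1: "distr \<pi>' borel fst = p'"
    proof -
      have "distr \<pi>' borel fst = \<pi> \<bind> (\<lambda>w. distr (L w) borel fst)"
        unfolding \<pi>'_def by (rule distr_bind[OF Lm nepi measurable_fst])
      also have "\<dots> = \<pi> \<bind> (\<lambda>w. K (fst w))" by (simp add: LK)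
      also have "\<dots> = distr \<pi> borel fst \<bind> K" by (rule bind_distr[OF fstm Km nepi, symmetric])
      also have "\<dots> = p'" unfolding p'_def Cpl_D(3)[OF pi] ..
      finally show ?thesis .
    qed
    have m2: "distr \<pi>' borel snd = q"
    proof -
      have "distr \<pi>' borel snd = \<pi> \<bind> (\<lambda>w. distr (L w) borel snd)"
        unfolding \<pi>'_def by (rule distr_bind[OF Lm nepi measurable_snd])
      also have "\<dots> = \<pi> \<bind> (\<lambda>w. return borel (snd w))" by (simp add: LS)
      also have "\<dots> = distr \<pi> borel snd" by (rule bind_return_distr'[OF nepi sndm])
      also have "\<dots> = q" by (rule Cpl_D(4)[OF pi])
      finally show ?thesis .
    qed
    have sL: "\<And>w. w \<in> space \<pi> \<Longrightarrow> sets (L w) = sets (borel \<Otimes>\<^sub>M borel)" by (rule sets_kernel[OF Lm])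
    have spi': "sets \<pi>' = sets (borel \<Otimes>\<^sub>M borel)" unfolding \<pi>'_def by (rule sets_bind[OF sL nepi])
    have ppi': "prob_space \<pi>'"
      unfolding \<pi>'_def
    proof (rule PI.prob_space_bind[OF AE_I2 Lm])
      fix w show "prob_space (L w)" unfolding L_def
        by (rule prob_space.prob_space_distr[OF Kp(1) pairm])
    qed
    have pi'C: "\<pi>' \<in> Cpl p' q" unfolding Cpl_def using ppi' spi' m1 m2 by blast
    have iin: "(\<lambda>(y, z). inner y z) \<in> borel_measurable (borel \<Otimes>\<^sub>M borel :: ('a \<times> 'a) measure)" by simp
    have "integral\<^sup>L \<pi>' (\<lambda>(y, z). inner y z) = (\<integral>w. integral\<^sup>L (L w) (\<lambda>(y, z). inner y z) \<partial>\<pi>)"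
      unfolding \<pi>'_def by (rule integral_bind_real(2)[OF Lm iin _ nepi])
        (use Cpl_integrable(1)[OF p'P2 q pi'C] in \<open>simp add: \<pi>'_def\<close>)
    also have "\<dots> = (\<integral>w. (\<lambda>(y, z). inner y z) w \<partial>\<pi>)"
    proof (rule Bochner_Integration.integral_cong[OF refl])
      fix w :: "'a \<times> 'a"
      have "integral\<^sup>L (L w) (\<lambda>(y, z). inner y z) = (\<integral>v. (\<lambda>(y, z). inner y z) (v, snd w) \<partial>K (fst w))"
        unfolding L_def by (rule integral_distr[OF pairm iin])
      also have "\<dots> = (\<integral>v. v \<bullet> snd w \<partial>K (fst w))" by simp
      also have "\<dots> = fst w \<bullet> snd w" by (rule Kb)
      finally show "integral\<^sup>L (L w) (\<lambda>(y, z). inner y z) = (\<lambda>(y, z). inner y z) w"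
        by (cases w) simp
    qed
    finally have "integral\<^sup>L \<pi> (\<lambda>(y, z). inner y z) = integral\<^sup>L \<pi>' (\<lambda>(y, z). inner y z)" by simp
    also have "\<dots> \<le> MCov p' q" by (rule MCov_facts(3)[OF p'P2 q pi'C])
    finally show "integral\<^sup>L \<pi> (\<lambda>(y, z). inner y z) \<le> MCov p' q" .
  qed
  show ?thesis using p'b psi_le cov by blast
qed


lemma return_P2_bary:
  fixes x :: "'a::euclidean_space"
  shows "return borel x \<in> P2_bary x"
proof -
  have "prob_space (return borel x)" by (rule prob_space_return) simp
  moreover have "sets (return borel x) = sets borel" by simp
  moreover have "integrable (return borel x) (\<lambda>y. (norm y)\<^sup>2)"
  proof (rule integrableI_nonneg)
    show "(\<integral>\<^sup>+ y. ennreal ((norm y)\<^sup>2) \<partial>return borel x) < \<infinity>"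
      by (subst nn_integral_return) auto
  qed auto
  moreover have "integral\<^sup>L (return borel x) (\<lambda>y. y) = x"
    by (rule integral_return) auto
  ultimately show ?thesis unfolding P2_bary_def P2_def by blast
qed

lemma phi_conv_eq:
  fixes \<psi> :: "'a::euclidean_space \<Rightarrow> real"
  assumes psi: "\<psi> \<in> C2" and q: "q \<in> P2"
  shows "phi q (conv_fun \<psi>) x = phi q \<psi> x"
proof -
  obtain a k l where b: "\<And>y. l + (norm y)\<^sup>2 / 2 \<le> \<psi> y \<and> \<psi> y \<le> a + k * (norm y)\<^sup>2"
    using C2_D(3)[OF psi] by blast
  have lc: "l + (norm y)\<^sup>2 / 2 \<le> conv_fun \<psi> y" for y
    by (rule conv_fun_lower) (use b in auto)
  define A where "A = P2_bary x"
  have Ane: "A \<noteq> {}" unfolding A_def using return_P2_bary by blast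
  have AP2: "p \<in> A \<Longrightarrow> p \<in> P2" for p unfolding A_def P2_bary_def by auto
  have bd1: "bdd_below ((\<lambda>p. integral\<^sup>L p (conv_fun \<psi>) - MCov p q) ` A)"
    using phi_term_lower[OF conv_fun_C2[OF psi] AP2 q lc] by (intro bdd_belowI) blast
  have bd2: "bdd_below ((\<lambda>p. integral\<^sup>L p \<psi> - MCov p q) ` A)"
    using phi_term_lower[OF psi AP2 q] b by (intro bdd_belowI) blast
  have le1: "phi q (conv_fun \<psi>) x \<le> phi q \<psi> x"
    unfolding phi_def A_def[symmetric]
  proof (rule cINF_mono[OF Ane bd1])
    fix m assume m: "m \<in> A"
    have "integral\<^sup>L m (conv_fun \<psi>) \<le> integral\<^sup>L m \<psi>"
      by (intro integral_mono C2_integrable[OF conv_fun_C2[OF psi] AP2[OF m]]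
          C2_integrable[OF psi AP2[OF m]] conv_fun_le[OF psi])
    show "\<exists>n\<in>A. integral\<^sup>L n (conv_fun \<psi>) - MCov n q \<le> integral\<^sup>L m \<psi> - MCov m q"
    proof (rule bexI[OF _ m])
      show "integral\<^sup>L m (conv_fun \<psi>) - MCov m q \<le> integral\<^sup>L m \<psi> - MCov m q"
        using \<open>integral\<^sup>L m (conv_fun \<psi>) \<le> integral\<^sup>L m \<psi>\<close> by linarith
    qed
  qed
  have le2: "phi q \<psi> x \<le> phi q (conv_fun \<psi>) x"
    unfolding phi_def A_def[symmetric]
  proof (rule cINF_greatest[OF Ane])
    fix p assume p: "p \<in> A"
    show "(INF p\<in>A. integral\<^sup>L p \<psi> - MCov p q) \<le> integral\<^sup>L p (conv_fun \<psi>) - MCov p q"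
    proof (rule field_le_epsilon)
      fix e :: real assume e: "0 < e"
      obtain p' where p': "p' \<in> A" "integral\<^sup>L p' \<psi> \<le> integral\<^sup>L p (conv_fun \<psi>) + e" "MCov p q \<le> MCov p' q"
        using main_step[OF psi q p[unfolded A_def] e] unfolding A_def by blast
      have "(INF p\<in>A. integral\<^sup>L p \<psi> - MCov p q) \<le> integral\<^sup>L p' \<psi> - MCov p' q"
        by (rule cINF_lower[OF bd2 p'(1)])
      also have "\<dots> \<le> integral\<^sup>L p (conv_fun \<psi>) - MCov p q + e" using p' by linarith
      finally show "(INF p\<in>A. integral\<^sup>L p \<psi> - MCov p q) \<le> integral\<^sup>L p (conv_fun \<psi>) - MCov p q + e" .
    qed
  qed
  show ?thesis using le1 le2 by linarith
qed

theorem proposition2p3: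
  fixes \<mu> \<nu> q :: "'a::euclidean_space measure"
  assumes "\<mu> \<in> P2" and "\<nu> \<in> P2" and "q \<in> P2"
    and "convex_order \<mu> \<nu>"
    and "no_mass_small_sets q"
  shows "(\<forall>\<psi> \<in> C2. Dtilde \<mu> \<nu> q (conv_fun \<psi>) \<le> Dtilde \<mu> \<nu> q \<psi>)
       \<and> (INF \<psi> \<in> C2. ereal (Dtilde \<mu> \<nu> q \<psi>))
           = (INF \<psi> \<in> {\<psi> \<in> C2. convex_on UNIV \<psi>}. ereal (Dtilde \<mu> \<nu> q \<psi>))"
proof -
  have D: "Dtilde \<mu> \<nu> q (conv_fun \<psi>) \<le> Dtilde \<mu> \<nu> q \<psi>" if psi: "\<psi> \<in> C2" for \<psi> :: "'a \<Rightarrow> real"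
  proof -
    have "phi q (conv_fun \<psi>) = phi q \<psi>" using phi_conv_eq[OF psi assms(3)] by (simp add: fun_eq_iff)
    moreover have "integral\<^sup>L \<nu> (conv_fun \<psi>) \<le> integral\<^sup>L \<nu> \<psi>"
      by (intro integral_mono C2_integrable[OF conv_fun_C2[OF psi] assms(2)]
          C2_integrable[OF psi assms(2)] conv_fun_le[OF psi])
    ultimately show ?thesis unfolding Dtilde_def by simp
  qed
  moreover have "(INF \<psi> \<in> C2. ereal (Dtilde \<mu> \<nu> q \<psi>))
           = (INF \<psi> \<in> {\<psi> \<in> C2. convex_on UNIV \<psi>}. ereal (Dtilde \<mu> \<nu> q \<psi>))"
  proof (rule antisym)
    show "(INF \<psi> \<in> C2. ereal (Dtilde \<mu> \<nu> q \<psi>)) \<le> (INF \<psi> \<in> {\<psi> \<in> C2. convex_on UNIV \<psi>}. ereal (Dtilde \<mu> \<nu> q \<psi>))"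
      by (rule INF_superset_mono) auto
  next
    show "(INF \<psi> \<in> {\<psi> \<in> C2. convex_on UNIV \<psi>}. ereal (Dtilde \<mu> \<nu> q \<psi>)) \<le> (INF \<psi> \<in> C2. ereal (Dtilde \<mu> \<nu> q \<psi>))"
    proof (rule INF_greatest)
      fix \<psi> :: "'a \<Rightarrow> real" assume psi: "\<psi> \<in> C2"
      have "conv_fun \<psi> \<in> {\<psi> \<in> C2. convex_on UNIV \<psi>}"
        using conv_fun_C2[OF psi] conv_fun_convex[OF psi] by blast
      then have "(INF \<psi> \<in> {\<psi> \<in> C2. convex_on UNIV \<psi>}. ereal (Dtilde \<mu> \<nu> q \<psi>)) \<le> ereal (Dtilde \<mu> \<nu> q (conv_fun \<psi>))"
        by (rule INF_lower)
      also have "\<dots> \<le> ereal (Dtilde \<mu> \<nu> q \<psi>)" using D[OF psi] by simp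
      finally show "(INF \<psi> \<in> {\<psi> \<in> C2. convex_on UNIV \<psi>}. ereal (Dtilde \<mu> \<nu> q \<psi>)) \<le> ereal (Dtilde \<mu> \<nu> q \<psi>)" .
    qed
  qed
  ultimately show ?thesis by blast
qed

end
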